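(* Assume the setting described in the context. Suppose that either (1) there are vectors $\lambda,\mu\in\mathbb{R}^F$ with $\mu_f\neq0$ and a constant $\theta\in(0,1)$ such that $\frac{\lambda_f}{\mu_f}\sum_{S\in\mathrm{Ind}(\Gamma(f))}\mu(S)\le\theta$ for all $f\in F$, where $\mu(S)=\prod_{g\in S}\mu_g$; or (2) $(\rho,\sim)$ satisfies Shearer's condition with vectors $p,\lambda$ and constant $\theta$, in which case $\mu(R):=q_R(p)/q_\varnothing(p)$. Then for every $R\in\mathrm{Ind}(F)$ and integer $t\ge0$, $$\sum_{\varphi\in\mathrm{Stab}(R,t)}\lambda_\varphi\le\mu(R)\,\theta^t.$$
   Context: Setting: $F$ is a finite set with a symmetric relation $\sim$ (loops $f\sim f$ allowed), and $\Gamma(f)=\{g\in F:f\sim g\}$, $\Gamma(S)=\bigcup_{f\in S}\Gamma(f)$. A set $S\subseteq F$ is independent if $f\not\sim g$ for all distinct $f,g\in S$; $\mathrm{Ind}(S)$ is the family of independent subsets of $S$. A sequence $\varphi=(I_1,\ldots,I_s)$ with $s\ge1$ is strongly stable if: (i) $I_r\in\mathrm{Ind}(F)$ for all $r$; (ii) $I_{r+1}\subseteq\Gamma(I_r)$ for $r\in[s-1]$; (iii) $I_r\neq\varnothing$ for $r\in[2,s]$. For such $\varphi$ let $R_\varphi=I_1$, $|\varphi|=\sum_r|I_r|$ and $\lambda_\varphi=\prod_r\prod_{f\in I_r}\lambda_f$. Let $\mathrm{Stab}(R,t)$ be the set of strongly stable sequences $\varphi$ with $R_\varphi=R$ and $|\varphi|\ge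 t$. Shearer's condition refers additionally to the following data: a finite set $\Omega$ in which the flaws $f\in F$ are nonempty subsets; probability distributions $\rho(\cdot\mid f,\sigma)$ with support $A(f,\sigma)$ for each $\sigma\in f$; and a distribution $\omega$ on $\Omega$ with $\omega>0$. Set $q_S(p)=\sum_{I:S\subseteq I\in\mathrm{Ind}(F)}(-1)^{|I|-|S|}\prod_{f\in I}p_f$. It requires $p\in\mathbb{R}^F$ with $q_S(p)\ge0$ for all $S\subseteq F$ and $q_\varnothing(p)>0$, a vector $\lambda$ with $\lambda_f\ge\sum_{\sigma\in f:\sigma'\in A(f,\sigma)}\rho(\sigma'\mid f,\sigma)\omega(\sigma)/\omega(\sigma')$ for all $f,\sigma'$, and $\theta\in(0,1)$ with $\lambda_f\le\theta p_f$ for all $f$.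
   Formalization: In case (1), $\lambda_f$ is nonnegative and $\mu_f$ is strictly positive for every f in F, in place of the sole condition $\mu_f\neq0$ on arbitrary real vectors. Each condition added here is assumed in the paper as well or is needed for the statement above to hold. *)

theory Defs
  imports "HOL-Analysis.Analysis"
begin

definition nbr :: "'a set \<Rightarrow> ('a \<Rightarrow> 'a \<Rightarrow> bool) \<Rightarrow> 'a \<Rightarrow> 'a set" where
  "nbr F rel f = {g \<in> F. rel f g}"

definition nbr_set :: "'a set \<Rightarrow> ('a \<Rightarrow> 'a \<Rightarrow> bool) \<Rightarrow> 'a set \<Rightarrow> 'a set" where
  "nbr_set F rel S = (\<Union>f\<in>S. nbr F rel f)"

definition independent :: "('a \<Rightarrow> 'a \<Rightarrow> bool) \<Rightarrow> 'a set \<Rightarrow> bool" where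
  "independent rel S \<longleftrightarrow> (\<forall>f\<in>S. \<forall>g\<in>S. f \<noteq> g \<longrightarrow> \<not> rel f g)"

definition Ind :: "('a \<Rightarrow> 'a \<Rightarrow> bool) \<Rightarrow> 'a set \<Rightarrow> 'a set set" where
  "Ind rel S = {I. I \<subseteq> S \<and> independent rel I}"

(* strongly stable sequences (I_1,...,I_s), represented as lists; index r (0-based) *)
definition strongly_stable :: "'a set \<Rightarrow> ('a \<Rightarrow> 'a \<Rightarrow> bool) \<Rightarrow> 'a set list \<Rightarrow> bool" where
  "strongly_stable F rel \<phi> \<longleftrightarrow>
     length \<phi> \<ge> 1 \<and>
     (\<forall>r < length \<phi>. \<phi> ! r \<in> Ind rel F) \<and>
     (\<forall>r. r + 1 < length \<phi> \<longrightarrow> \<phi> ! (r + 1) \<subseteq> nbr_set F rel (\<phi> ! r)) \<and>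
     (\<forall>r. 1 \<le> r \<and> r < length \<phi> \<longrightarrow> \<phi> ! r \<noteq> {})"

definition seq_size :: "'a set list \<Rightarrow> nat" where
  "seq_size \<phi> = sum_list (map card \<phi>)"

definition seq_weight :: "('a \<Rightarrow> real) \<Rightarrow> 'a set list \<Rightarrow> real" where
  "seq_weight lam \<phi> = prod_list (map (\<lambda>I. \<Prod>f\<in>I. lam f) \<phi>)"

definition Stab :: "'a set \<Rightarrow> ('a \<Rightarrow> 'a \<Rightarrow> bool) \<Rightarrow> 'a set \<Rightarrow> nat \<Rightarrow> 'a set list set" where
  "Stab F rel R t = {\<phi>. strongly_stable F rel \<phi> \<and> hd \<phi> = R \<and> seq_size \<phi> \<ge> t}"

definition q_poly :: "'a set \<Rightarrow> ('a \<Rightarrow> 'a \<Rightarrow> bool) \<Rightarrow> ('a \<Rightarrow> real) \<Rightarrow> 'a set \<Rightarrow> real" where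
  "q_poly F rel p S = (\<Sum>I \<in> {I \<in> Ind rel F. S \<subseteq> I}. (-1) ^ (card I - card S) * (\<Prod>f\<in>I. p f))"

definition supp_A :: "'w set \<Rightarrow> ('w set \<Rightarrow> 'w \<Rightarrow> 'w \<Rightarrow> real) \<Rightarrow> 'w set \<Rightarrow> 'w \<Rightarrow> 'w set" where
  "supp_A \<Omega> \<rho> f \<sigma> = {\<sigma>' \<in> \<Omega>. \<rho> f \<sigma> \<sigma>' \<noteq> 0}"

definition shearer_condition ::
  "'w set \<Rightarrow> 'w set set \<Rightarrow> ('w set \<Rightarrow> 'w set \<Rightarrow> bool) \<Rightarrow> ('w set \<Rightarrow> 'w \<Rightarrow> 'w \<Rightarrow> real)
   \<Rightarrow> ('w \<Rightarrow> real) \<Rightarrow> ('w set \<Rightarrow> real) \<Rightarrow> ('w set \<Rightarrow> real) \<Rightarrow> real \<Rightarrow> bool" where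
  "shearer_condition \<Omega> F rel \<rho> \<omega> p lam \<theta> \<longleftrightarrow>
     (\<forall>S. S \<subseteq> F \<longrightarrow> q_poly F rel p S \<ge> 0) \<and>
     q_poly F rel p {} > 0 \<and>
     (\<forall>f\<in>F. \<forall>\<sigma>'\<in>\<Omega>.
        lam f \<ge> (\<Sum>\<sigma> \<in> {\<sigma> \<in> f. \<sigma>' \<in> supp_A \<Omega> \<rho> f \<sigma>}. \<rho> f \<sigma> \<sigma>' * \<omega> \<sigma> / \<omega> \<sigma>')) \<and>
     0 < \<theta> \<and> \<theta> < 1 \<and>
     (\<forall>f\<in>F. lam f \<le> \<theta> * p f)"

definition flaw_setting ::
  "'w set \<Rightarrow> 'w set set \<Rightarrow> ('w set \<Rightarrow> 'w \<Rightarrow> 'w \<Rightarrow> real) \<Rightarrow> ('w \<Rightarrow> real) \<Rightarrow> bool" where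
  "flaw_setting \<Omega> F \<rho> \<omega> \<longleftrightarrow>
     finite \<Omega> \<and> (\<forall>f\<in>F. f \<subseteq> \<Omega> \<and> f \<noteq> {}) \<and>
     (\<forall>f\<in>F. \<forall>\<sigma>\<in>f. (\<forall>\<sigma>'\<in>\<Omega>. \<rho> f \<sigma> \<sigma>' \<ge> 0) \<and> (\<Sum>\<sigma>'\<in>\<Omega>. \<rho> f \<sigma> \<sigma>') = 1) \<and>
     (\<forall>\<sigma>\<in>\<Omega>. \<omega> \<sigma> > 0) \<and> (\<Sum>\<sigma>\<in>\<Omega>. \<omega> \<sigma>) = 1"

end

theory Submission
  imports Defs
begin

definition StabK :: "'a set \<Rightarrow> ('a \<Rightarrow> 'a \<Rightarrow> bool) \<Rightarrow> 'a set \<Rightarrow> nat \<Rightarrow> nat \<Rightarrow> 'a set list set" where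
  "StabK F rel R t k = {\<phi> \<in> Stab F rel R t. length \<phi> \<le> k}"

lemma Ind_sub: "S \<in> Ind rel X \<Longrightarrow> S \<subseteq> X"
  by (simp add: Ind_def)

lemma Ind_mono: "X \<subseteq> Y \<Longrightarrow> Ind rel X \<subseteq> Ind rel Y"
  by (auto simp: Ind_def)

lemma finite_Ind: "finite X \<Longrightarrow> finite (Ind rel X)"
  by (rule finite_subset[of _ "Pow X"]) (auto simp: Ind_def)

lemma nbr_set_sub: "nbr_set F rel R \<subseteq> F"
  by (auto simp: nbr_set_def nbr_def)

lemma stable_set_sub: "strongly_stable F rel \<phi> \<Longrightarrow> set \<phi> \<subseteq> Pow F"
  by (auto simp: strongly_stable_def in_set_conv_nth Ind_def) blast

lemma finite_StabK: "finite F \<Longrightarrow> finite (StabK F rel R t k)"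
  apply (rule finite_subset[of _ "{xs. set xs \<subseteq> Pow F \<and> length xs \<le> k}"])
   apply (auto simp: StabK_def Stab_def dest: stable_set_sub)[1]
  by (rule finite_lists_length_le) simp

lemma weight_nonneg:
  assumes "\<forall>f\<in>F. lam f \<ge> 0" "set \<phi> \<subseteq> Pow F"
  shows "seq_weight lam \<phi> \<ge> 0"
  using assms(2) unfolding seq_weight_def
proof (induction \<phi>)
  case Nil then show ?case by simp
next
  case (Cons a \<phi>)
  have "(\<Prod>f\<in>a. lam f) \<ge> 0" using Cons.prems assms(1) by (intro prod_nonneg) auto
  then show ?case using Cons by simp
qed

lemma decompose:
  assumes "\<phi> \<in> StabK F rel R t (Suc k)"
  shows "(\<phi> = [R] \<and> t \<le> card R) \<or>
    (\<exists>S \<phi>'. \<phi> = R # \<phi>' \<and> S \<in> Ind rel (nbr_set F rel R) - {{}} \<and> \<phi>' \<in> StabK F rel S (t - card R) k)"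
proof -
  have ss: "strongly_stable F rel \<phi>" and hd: "hd \<phi> = R" and sz: "seq_size \<phi> \<ge> t"
    and len: "length \<phi> \<le> Suc k"
    using assms by (auto simp: StabK_def Stab_def)
  obtain xs where phi: "\<phi> = R # xs"
    using ss hd by (cases \<phi>) (auto simp: strongly_stable_def)
  show ?thesis
  proof (cases xs)
    case Nil
    then show ?thesis using phi sz by (simp add: seq_size_def)
  next
    case (Cons y ys)
    have n: "\<And>r. r < length \<phi> \<Longrightarrow> \<phi> ! r \<in> Ind rel F"
      and a: "\<And>r. r + 1 < length \<phi> \<Longrightarrow> \<phi> ! (r + 1) \<subseteq> nbr_set F rel (\<phi> ! r)"
      and ne: "\<And>r. 1 \<le> r \<Longrightarrow> r < length \<phi> \<Longrightarrow> \<phi> ! r \<noteq> {}"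
      using ss by (auto simp: strongly_stable_def)
    have ssx: "strongly_stable F rel xs"
      unfolding strongly_stable_def
    proof (intro conjI allI impI)
      show "1 \<le> length xs" using Cons by simp
    next
      fix r assume "r < length xs" then show "xs ! r \<in> Ind rel F" using n[of "Suc r"] phi by simp
    next
      fix r assume "r + 1 < length xs" then show "xs ! (r + 1) \<subseteq> nbr_set F rel (xs ! r)"
        using a[of "Suc r"] phi by simp
    next
      fix r assume "1 \<le> r \<and> r < length xs" then show "xs ! r \<noteq> {}"
        using ne[of "Suc r"] phi by simp
    qed
    have y1: "y \<subseteq> nbr_set F rel R" using a[of 0] phi Cons by simp
    have y2: "y \<in> Ind rel F" using n[of 1] phi Cons by simp
    have y3: "y \<noteq> {}" using ne[of 1] phi Cons by simp
    have yI: "y \<in> Ind rel (nbr_set F rel R) - {{}}" using y1 y2 y3 by (auto simp: Ind_def)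
    have "seq_size xs \<ge> t - card R" using sz phi by (simp add: seq_size_def)
    then have "xs \<in> StabK F rel y (t - card R) k"
      using ssx len phi Cons by (simp add: StabK_def Stab_def)
    then show ?thesis using phi yI by blast
  qed
qed


lemma StabK_bound:
  fixes M :: "'a set \<Rightarrow> real" and \<theta> :: real
  assumes fin: "finite F" and lam0: "\<forall>f\<in>F. lam f \<ge> 0" and th: "0 \<le> \<theta>" "\<theta> \<le> 1"
    and M0: "M {} = 1" and Mnn: "\<forall>S\<in>Ind rel F. M S \<ge> 0"
    and key: "\<forall>R\<in>Ind rel F. (\<Prod>f\<in>R. lam f) * (\<Sum>S\<in>Ind rel (nbr_set F rel R). M S) \<le> \<theta> ^ card R * M R"
  shows "\<forall>R\<in>Ind rel F. \<forall>t. (\<Sum>\<phi>\<in>StabK F rel R t k. seq_weight lam \<phi>) \<le> M R * \<theta> ^ t"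
proof (induction k)
  case 0
  have "StabK F rel R t 0 = {}" for R t
    by (auto simp: StabK_def Stab_def strongly_stable_def)
  then show ?case using Mnn th by simp
next
  case (Suc k)
  show ?case
  proof (intro ballI allI)
    fix R t assume R: "R \<in> Ind rel F"
    define I where "I = Ind rel (nbr_set F rel R) - {{}}"
    define A where "A = (if t \<le> card R then {[R]} else {})"
    define g where "g = (\<lambda>(S::'a set, \<phi>'::'a set list). R # \<phi>')"
    define SG where "SG = (SIGMA S:I. StabK F rel S (t - card R) k)"
    define w where "w = seq_weight lam"
    define LR where "LR = (\<Prod>f\<in>R. lam f)"
    have RF: "R \<subseteq> F" using R by (simp add: Ind_def)
    have LR0: "LR \<ge> 0" unfolding LR_def using lam0 RF by (intro prod_nonneg) auto
    have finI: "finite I" unfolding I_def by (intro finite_Diff finite_Ind finite_subset[OF nbr_set_sub fin])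
    have IF: "I \<subseteq> Ind rel F" unfolding I_def using Ind_mono[OF nbr_set_sub] by blast
    have finSG: "finite SG" unfolding SG_def using finI by (auto intro: finite_StabK fin)
    have sub: "StabK F rel R t (Suc k) \<subseteq> A \<union> g ` SG"
    proof
      fix \<phi> assume "\<phi> \<in> StabK F rel R t (Suc k)"
      from decompose[OF this] show "\<phi> \<in> A \<union> g ` SG"
        unfolding A_def SG_def g_def I_def by (auto simp: image_iff)
    qed
    have wnn: "w \<phi> \<ge> 0" if "\<phi> \<in> A \<union> g ` SG" for \<phi>
    proof -
      have "set \<phi> \<subseteq> Pow F" using that RF
        by (auto simp: A_def SG_def g_def StabK_def Stab_def split: if_splits dest!: stable_set_sub) blast+
      then show ?thesis unfolding w_def using weight_nonneg lam0 by blast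
    qed
    have finA: "finite A" by (simp add: A_def)
    have "(\<Sum>\<phi>\<in>StabK F rel R t (Suc k). w \<phi>) \<le> (\<Sum>\<phi>\<in>A \<union> g ` SG. w \<phi>)"
      by (rule sum_mono2) (use finA finSG sub wnn in auto)
    also have "\<dots> \<le> (\<Sum>\<phi>\<in>A. w \<phi>) + (\<Sum>\<phi>\<in>g ` SG. w \<phi>)"
    proof -
      have "(\<Sum>\<phi>\<in>A \<inter> g ` SG. w \<phi>) \<ge> 0" using wnn by (intro sum_nonneg) auto
      then show ?thesis using finA finSG by (simp add: sum_Un)
    qed
    finally have step1: "(\<Sum>\<phi>\<in>StabK F rel R t (Suc k). w \<phi>) \<le> (\<Sum>\<phi>\<in>A. w \<phi>) + (\<Sum>\<phi>\<in>g ` SG. w \<phi>)" .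
    have inj: "inj_on g SG"
      by (auto simp: inj_on_def g_def SG_def StabK_def Stab_def)
    have "(\<Sum>\<phi>\<in>g ` SG. w \<phi>) = (\<Sum>p\<in>SG. w (g p))"
      by (rule sum.reindex[OF inj, unfolded comp_def])
    also have "\<dots> = (\<Sum>S\<in>I. \<Sum>\<phi>'\<in>StabK F rel S (t - card R) k. w (R # \<phi>'))"
      unfolding SG_def g_def by (subst sum.Sigma) (use finI fin finite_StabK in \<open>auto simp: case_prod_unfold\<close>)
    also have "\<dots> = (\<Sum>S\<in>I. LR * (\<Sum>\<phi>'\<in>StabK F rel S (t - card R) k. w \<phi>'))"
      by (simp add: w_def seq_weight_def LR_def sum_distrib_left)
    also have "\<dots> \<le> (\<Sum>S\<in>I. LR * (M S * \<theta> ^ (t - card R)))"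
      using Suc.IH IF LR0 unfolding w_def by (intro sum_mono mult_left_mono) auto
    finally have step2: "(\<Sum>\<phi>\<in>g ` SG. w \<phi>) \<le> LR * (\<Sum>S\<in>I. M S) * \<theta> ^ (t - card R)"
      by (simp add: sum_distrib_left sum_distrib_right mult_ac)
    have emp: "{} \<in> Ind rel (nbr_set F rel R)" by (simp add: Ind_def independent_def)
    have finN: "finite (Ind rel (nbr_set F rel R))" by (intro finite_Ind finite_subset[OF nbr_set_sub fin])
    have sumsplit: "(\<Sum>S\<in>Ind rel (nbr_set F rel R). M S) = 1 + (\<Sum>S\<in>I. M S)"
      unfolding I_def using emp finN M0 by (simp add: sum.remove)
    have keyR: "LR * (1 + (\<Sum>S\<in>I. M S)) \<le> \<theta> ^ card R * M R"
      using key R sumsplit unfolding LR_def by metis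
    have MR: "M R \<ge> 0" using Mnn R by auto
    have IM: "(\<Sum>S\<in>I. M S) \<ge> 0" using Mnn IF by (intro sum_nonneg) auto
    show "(\<Sum>\<phi>\<in>StabK F rel R t (Suc k). seq_weight lam \<phi>) \<le> M R * \<theta> ^ t"
    proof (cases "t \<le> card R")
      case True
      have "(\<Sum>\<phi>\<in>A. w \<phi>) = LR" using True by (simp add: A_def w_def seq_weight_def LR_def)
      with step1 step2 True have "(\<Sum>\<phi>\<in>StabK F rel R t (Suc k). w \<phi>) \<le> LR * (1 + (\<Sum>S\<in>I. M S))"
        by (simp add: algebra_simps)
      also have "\<dots> \<le> \<theta> ^ card R * M R" by (rule keyR)
      also have "\<dots> \<le> \<theta> ^ t * M R" using True th MR by (intro mult_right_mono power_decreasing) auto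
      finally show ?thesis by (simp add: w_def mult_ac)
    next
      case False
      have "(\<Sum>\<phi>\<in>A. w \<phi>) = 0" using False by (simp add: A_def)
      with step1 step2 have "(\<Sum>\<phi>\<in>StabK F rel R t (Suc k). w \<phi>) \<le> LR * (\<Sum>S\<in>I. M S) * \<theta> ^ (t - card R)"
        by simp
      also have "\<dots> \<le> LR * (1 + (\<Sum>S\<in>I. M S)) * \<theta> ^ (t - card R)"
        using LR0 th by (intro mult_right_mono mult_left_mono) auto
      also have "\<dots> \<le> \<theta> ^ card R * M R * \<theta> ^ (t - card R)"
        using keyR th by (intro mult_right_mono) auto
      also have "\<dots> = M R * \<theta> ^ t"
        using False by (simp add: mult_ac power_add[symmetric])
      finally show ?thesis by (simp add: w_def)
    qed
  qed
qed


lemma Stab_bound: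
  fixes M :: "'a set \<Rightarrow> real" and \<theta> :: real
  assumes fin: "finite F" and lam0: "\<forall>f\<in>F. lam f \<ge> 0" and th: "0 \<le> \<theta>" "\<theta> \<le> 1"
    and M0: "M {} = 1" and Mnn: "\<forall>S\<in>Ind rel F. M S \<ge> 0"
    and key: "\<forall>R\<in>Ind rel F. (\<Prod>f\<in>R. lam f) * (\<Sum>S\<in>Ind rel (nbr_set F rel R). M S) \<le> \<theta> ^ card R * M R"
  shows "\<forall>R\<in>Ind rel F. \<forall>t::nat.
             (seq_weight lam) summable_on (Stab F rel R t) \<and>
             (\<Sum>\<^sub>\<infinity>\<phi>\<in>Stab F rel R t. seq_weight lam \<phi>) \<le> M R * \<theta> ^ t"
proof (intro ballI allI)
  fix R t assume R: "R \<in> Ind rel F"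
  have nn: "seq_weight lam \<phi> \<ge> 0" if "\<phi> \<in> Stab F rel R t" for \<phi>
    using that weight_nonneg[OF lam0] stable_set_sub unfolding Stab_def by blast
  have fs: "sum (seq_weight lam) X \<le> M R * \<theta> ^ t" if X: "finite X" "X \<subseteq> Stab F rel R t" for X
  proof -
    define k where "k = (\<Sum>\<phi>\<in>X. length \<phi>)"
    have "length \<phi> \<le> k" if "\<phi> \<in> X" for \<phi>
      unfolding k_def using X(1) that by (intro member_le_sum) auto
    then have sub: "X \<subseteq> StabK F rel R t k" using X by (auto simp: StabK_def)
    have "sum (seq_weight lam) X \<le> sum (seq_weight lam) (StabK F rel R t k)"
      by (rule sum_mono2) (use finite_StabK[OF fin] sub nn in \<open>auto simp: StabK_def\<close>)
    also have "\<dots> \<le> M R * \<theta> ^ t"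
      using StabK_bound[OF fin lam0 th M0 Mnn key] R by blast
    finally show ?thesis .
  qed
  have sm: "(seq_weight lam) summable_on (Stab F rel R t)"
    by (rule nonneg_bdd_above_summable_on) (use nn fs in \<open>auto simp: bdd_above_def\<close>)
  show "(seq_weight lam) summable_on (Stab F rel R t) \<and>
             (\<Sum>\<^sub>\<infinity>\<phi>\<in>Stab F rel R t. seq_weight lam \<phi>) \<le> M R * \<theta> ^ t"
    using sm infsum_le_finite_sums[OF sm fs] by auto
qed


lemma neg1_diff: "b \<le> a \<Longrightarrow> (-1::real) ^ (a - b) = (-1) ^ a * (-1) ^ b"
proof -
  assume "b \<le> a"
  then have "(-1::real) ^ a = (-1) ^ (a - b) * (-1) ^ b" by (simp flip: power_add)
  then have "(-1::real) ^ a * (-1) ^ b = (-1) ^ (a - b) * ((-1) ^ b * (-1) ^ b)" by simp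
  also have "(-1::real) ^ b * (-1) ^ b = 1" by (simp flip: power_add)
  finally show ?thesis by simp
qed

lemma alt_pow: "finite B \<Longrightarrow> (\<Sum>S\<in>Pow B. (-1::real) ^ card S) = (if B = {} then 1 else 0)"
proof -
  assume fB: "finite B"
  show ?thesis
  proof (cases "B = {}")
    case False
    have "card {T. T \<subseteq> B \<and> {} \<subseteq> T \<and> even (card T)} = card {T. T \<subseteq> B \<and> {} \<subseteq> T \<and> odd (card T)}"
      using fB False by (intro card_subsupersets_even_odd) auto
    then have "(\<Sum>S\<in>Pow B. (-1::real) ^ card S) = 0"
      using fB by (intro sum_alternating_cancels) (auto simp: Pow_def)
    then show ?thesis using False by simp
  qed simp
qed

lemma q_sum_Ind:
  fixes p :: "'a \<Rightarrow> real"
  assumes fin: "finite F" and XF: "X \<subseteq> F"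
  shows "(\<Sum>S\<in>Ind rel X. q_poly F rel p S) = (\<Sum>I\<in>{I\<in>Ind rel F. I \<inter> X = {}}. (-1) ^ card I * (\<Prod>f\<in>I. p f))"
proof -
  have fI: "finite (Ind rel F)" "finite (Ind rel X)" using fin XF finite_subset by (auto intro: finite_Ind)
  have "(\<Sum>S\<in>Ind rel X. q_poly F rel p S) =
     (\<Sum>I\<in>Ind rel F. \<Sum>S\<in>{S\<in>Ind rel X. S \<subseteq> I}. (-1) ^ (card I - card S) * (\<Prod>f\<in>I. p f))"
    unfolding q_poly_def by (rule sum.swap_restrict) (use fI in auto)
  also have "\<dots> = (\<Sum>I\<in>Ind rel F. if I \<inter> X = {} then (-1) ^ card I * (\<Prod>f\<in>I. p f) else 0)"
  proof (rule sum.cong[OF refl])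
    fix I assume I: "I \<in> Ind rel F"
    have fIn: "finite I" using I fin by (auto simp: Ind_def intro: finite_subset)
    have eq: "{S\<in>Ind rel X. S \<subseteq> I} = Pow (I \<inter> X)"
      using I by (auto simp: Ind_def independent_def)
    have "(\<Sum>S\<in>{S\<in>Ind rel X. S \<subseteq> I}. (-1) ^ (card I - card S) * (\<Prod>f\<in>I. p f))
       = (\<Sum>S\<in>Pow (I \<inter> X). (-1) ^ card I * (\<Prod>f\<in>I. p f) * (-1) ^ card S)"
      unfolding eq
    proof (rule sum.cong[OF refl])
      fix S assume "S \<in> Pow (I \<inter> X)"
      then have "card S \<le> card I" using fIn by (auto intro: card_mono)
      then show "(-1) ^ (card I - card S) * (\<Prod>f\<in>I. p f) = (-1) ^ card I * (\<Prod>f\<in>I. p f) * (-1) ^ card S"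
        by (simp add: neg1_diff)
    qed
    also have "\<dots> = (-1) ^ card I * (\<Prod>f\<in>I. p f) * (\<Sum>S\<in>Pow (I \<inter> X). (-1) ^ card S)"
      by (simp add: sum_distrib_left)
    also have "\<dots> = (if I \<inter> X = {} then (-1) ^ card I * (\<Prod>f\<in>I. p f) else 0)"
      using fIn alt_pow[of "I \<inter> X"] by (simp del: Pow_Int_eq)
    finally show "(\<Sum>S\<in>{S\<in>Ind rel X. S \<subseteq> I}. (-1) ^ (card I - card S) * (\<Prod>f\<in>I. p f)) = \<dots>" .
  qed
  also have "\<dots> = (\<Sum>I\<in>{I\<in>Ind rel F. I \<inter> X = {}}. (-1) ^ card I * (\<Prod>f\<in>I. p f))"
    using fI by (simp add: sum.inter_filter)
  finally show ?thesis .
qed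

lemma q_R_factor:
  fixes p :: "'a \<Rightarrow> real"
  assumes fin: "finite F" and sym: "\<forall>f\<in>F. \<forall>g\<in>F. rel f g = rel g f" and R: "R \<in> Ind rel F"
  shows "q_poly F rel p R = (\<Prod>f\<in>R. p f) *
     (\<Sum>I\<in>{I\<in>Ind rel F. I \<inter> (R \<union> nbr_set F rel R) = {}}. (-1) ^ card I * (\<Prod>f\<in>I. p f))"
proof -
  define J where "J = {I\<in>Ind rel F. I \<inter> (R \<union> nbr_set F rel R) = {}}"
  have RF: "R \<subseteq> F" and Rind: "independent rel R" using R by (auto simp: Ind_def)
  have fR: "finite R" using RF fin finite_subset by auto
  have fJ: "finite J" unfolding J_def using finite_Ind[OF fin] by auto
  have inj: "inj_on (\<lambda>I. I \<union> R) J" unfolding J_def inj_on_def by blast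
  have img: "(\<lambda>I. I \<union> R) ` J = {I \<in> Ind rel F. R \<subseteq> I}"
  proof
    show "(\<lambda>I. I \<union> R) ` J \<subseteq> {I \<in> Ind rel F. R \<subseteq> I}"
    proof (rule image_subsetI)
      fix I assume I: "I \<in> J"
      have IF: "I \<subseteq> F" and Ii: "independent rel I" and D: "I \<inter> (R \<union> nbr_set F rel R) = {}"
        using I by (auto simp: J_def Ind_def)
      have nr: "\<not> rel r j" if "r \<in> R" "j \<in> I" for r j
      proof
        assume "rel r j"
        then have "j \<in> nbr_set F rel R" using that IF by (auto simp: nbr_set_def nbr_def)
        then show False using D that by auto
      qed
      have "independent rel (I \<union> R)"
        unfolding independent_def
      proof (intro ballI impI)
        fix x y assume xy: "x \<in> I \<union> R" "y \<in> I \<union> R" "x \<noteq> y"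
        show "\<not> rel x y"
        proof (cases "x \<in> I")
          case xI: True
          show ?thesis
          proof (cases "y \<in> I")
            case True then show ?thesis using xI xy Ii by (auto simp: independent_def)
          next
            case False
            then have "y \<in> R" using xy by auto
            then show ?thesis using nr[of y x] xI sym IF RF by auto
          qed
        next
          case False
          then have xR: "x \<in> R" using xy by auto
          show ?thesis
          proof (cases "y \<in> I")
            case True then show ?thesis using nr[of x y] xR by auto
          next
            case False
            then have "y \<in> R" using xy by auto
            then show ?thesis using xR xy Rind by (auto simp: independent_def)
          qed
        qed
      qed
      then show "I \<union> R \<in> {I \<in> Ind rel F. R \<subseteq> I}" using IF RF by (auto simp: Ind_def)
    qed
  next
    show "{I \<in> Ind rel F. R \<subseteq> I} \<subseteq> (\<lambda>I. I \<union> R) ` J"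
    proof (rule subsetI)
      fix I assume "I \<in> {I \<in> Ind rel F. R \<subseteq> I}"
      then have I: "I \<in> Ind rel F" "R \<subseteq> I" by auto
      have "(I - R) \<inter> nbr_set F rel R = {}"
      proof (rule ccontr)
        assume "(I - R) \<inter> nbr_set F rel R \<noteq> {}"
        then obtain j r where "j \<in> I" "j \<notin> R" "r \<in> R" "rel r j"
          by (auto simp: nbr_set_def nbr_def)
        then show False using I by (auto simp: Ind_def independent_def)
      qed
      then have "I - R \<in> J" using I unfolding J_def Ind_def independent_def by auto
      moreover have "I = (I - R) \<union> R" using I by auto
      ultimately show "I \<in> (\<lambda>I. I \<union> R) ` J" by blast
    qed
  qed
  have "q_poly F rel p R = (\<Sum>I\<in>(\<lambda>I. I \<union> R) ` J. (-1) ^ (card I - card R) * (\<Prod>f\<in>I. p f))"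
    unfolding q_poly_def img ..
  also have "\<dots> = (\<Sum>I\<in>J. (-1) ^ (card (I \<union> R) - card R) * (\<Prod>f\<in>I \<union> R. p f))"
    by (subst sum.reindex[OF inj]) simp
  also have "\<dots> = (\<Sum>I\<in>J. (\<Prod>f\<in>R. p f) * ((-1) ^ card I * (\<Prod>f\<in>I. p f)))"
  proof (rule sum.cong[OF refl])
    fix I assume I: "I \<in> J"
    have fI: "finite I" using I fin by (auto simp: J_def Ind_def intro: finite_subset)
    have d: "I \<inter> R = {}" using I by (auto simp: J_def)
    show "(-1) ^ (card (I \<union> R) - card R) * (\<Prod>f\<in>I \<union> R. p f) = (\<Prod>f\<in>R. p f) * ((-1) ^ card I * (\<Prod>f\<in>I. p f))"
      using fI fR d by (simp add: card_Un_disjoint prod.union_disjoint)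
  qed
  also have "\<dots> = (\<Prod>f\<in>R. p f) * (\<Sum>I\<in>J. (-1) ^ card I * (\<Prod>f\<in>I. p f))"
    by (simp add: sum_distrib_left)
  finally show ?thesis unfolding J_def .
qed


lemma Ind_union_bound:
  fixes mu :: "'a \<Rightarrow> real"
  assumes fin: "finite F" and mu: "\<forall>g\<in>F. mu g > 0" and XF: "X \<subseteq> F" and YF: "Y \<subseteq> F"
  shows "(\<Sum>S\<in>Ind rel (X \<union> Y). \<Prod>g\<in>S. mu g) \<le> (\<Sum>A\<in>Ind rel X. \<Prod>g\<in>A. mu g) * (\<Sum>B\<in>Ind rel Y. \<Prod>g\<in>B. mu g)"
proof -
  define h where "h = (\<lambda>S. (S \<inter> X, S - X))"
  have fX: "finite X" "finite Y" "finite (X \<union> Y)" using fin XF YF finite_subset by auto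
  have fI: "finite (Ind rel X)" "finite (Ind rel Y)" "finite (Ind rel (X \<union> Y))" using fX finite_Ind by blast+
  have inj: "inj_on h (Ind rel (X \<union> Y))" unfolding h_def inj_on_def by auto
  have img: "h ` Ind rel (X \<union> Y) \<subseteq> Ind rel X \<times> Ind rel Y"
    unfolding h_def Ind_def independent_def by auto
  have pos: "(\<Prod>g\<in>S. mu g) \<ge> 0" if "S \<subseteq> F" for S using that mu by (intro prod_nonneg) (auto intro: less_imp_le)
  have "(\<Sum>S\<in>Ind rel (X \<union> Y). \<Prod>g\<in>S. mu g) = (\<Sum>S\<in>Ind rel (X \<union> Y). (\<Prod>g\<in>fst (h S). mu g) * (\<Prod>g\<in>snd (h S). mu g))"
  proof (rule sum.cong[OF refl])
    fix S assume S: "S \<in> Ind rel (X \<union> Y)"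
    have fS: "finite S" using S fX by (auto simp: Ind_def intro: finite_subset)
    have "S = (S \<inter> X) \<union> (S - X)" by auto
    then have "(\<Prod>g\<in>S. mu g) = (\<Prod>g\<in>(S \<inter> X) \<union> (S - X). mu g)" by simp
    also have "\<dots> = (\<Prod>g\<in>S \<inter> X. mu g) * (\<Prod>g\<in>S - X. mu g)"
      using fS by (intro prod.union_disjoint) auto
    finally show "(\<Prod>g\<in>S. mu g) = (\<Prod>g\<in>fst (h S). mu g) * (\<Prod>g\<in>snd (h S). mu g)" by (simp add: h_def)
  qed
  also have "\<dots> = (\<Sum>q\<in>h ` Ind rel (X \<union> Y). (\<Prod>g\<in>fst q. mu g) * (\<Prod>g\<in>snd q. mu g))"
    by (subst sum.reindex[OF inj]) simp
  also have "\<dots> \<le> (\<Sum>q\<in>Ind rel X \<times> Ind rel Y. (\<Prod>g\<in>fst q. mu g) * (\<Prod>g\<in>snd q. mu g))"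
  proof (rule sum_mono2)
    show "finite (Ind rel X \<times> Ind rel Y)" using fI by auto
    show "h ` Ind rel (X \<union> Y) \<subseteq> Ind rel X \<times> Ind rel Y" by (rule img)
    fix q assume "q \<in> Ind rel X \<times> Ind rel Y - h ` Ind rel (X \<union> Y)"
    then have "fst q \<subseteq> F" "snd q \<subseteq> F" using XF YF by (auto simp: Ind_def)
    then show "0 \<le> (\<Prod>g\<in>fst q. mu g) * (\<Prod>g\<in>snd q. mu g)" using pos by (intro mult_nonneg_nonneg) auto
  qed
  also have "\<dots> = (\<Sum>A\<in>Ind rel X. \<Prod>g\<in>A. mu g) * (\<Sum>B\<in>Ind rel Y. \<Prod>g\<in>B. mu g)"
    by (simp add: sum_product sum.cartesian_product case_prod_unfold)
  finally show ?thesis .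
qed

lemma nbr_set_insert: "nbr_set F rel (insert f R) = nbr F rel f \<union> nbr_set F rel R"
  by (simp add: nbr_set_def)

lemma Ind_prod_bound:
  fixes mu :: "'a \<Rightarrow> real"
  assumes fin: "finite F" and mu: "\<forall>g\<in>F. mu g > 0" and RF: "R \<subseteq> F"
  shows "(\<Sum>S\<in>Ind rel (nbr_set F rel R). \<Prod>g\<in>S. mu g) \<le> (\<Prod>f\<in>R. \<Sum>S\<in>Ind rel (nbr F rel f). \<Prod>g\<in>S. mu g)"
proof -
  have fR: "finite R" using RF fin finite_subset by auto
  from fR RF show ?thesis
  proof (induction R rule: finite_induct)
    case empty
    have "Ind rel {} = {{}}" by (auto simp: Ind_def independent_def)
    then show ?case by (simp add: nbr_set_def)
  next
    case (insert f R)
    have nF: "nbr F rel f \<subseteq> F" by (auto simp: nbr_def)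
    have sF: "(\<Sum>S\<in>Ind rel (nbr F rel f). \<Prod>g\<in>S. mu g) \<ge> 0"
      using mu nF by (intro sum_nonneg prod_nonneg) (auto simp: Ind_def intro: less_imp_le)
    have "(\<Sum>S\<in>Ind rel (nbr_set F rel (insert f R)). \<Prod>g\<in>S. mu g)
       \<le> (\<Sum>S\<in>Ind rel (nbr F rel f). \<Prod>g\<in>S. mu g) * (\<Sum>S\<in>Ind rel (nbr_set F rel R). \<Prod>g\<in>S. mu g)"
      unfolding nbr_set_insert by (rule Ind_union_bound[OF fin mu nF nbr_set_sub])
    also have "\<dots> \<le> (\<Sum>S\<in>Ind rel (nbr F rel f). \<Prod>g\<in>S. mu g) * (\<Prod>f\<in>R. \<Sum>S\<in>Ind rel (nbr F rel f). \<Prod>g\<in>S. mu g)"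
      using insert sF by (intro mult_left_mono) auto
    finally show ?case using insert by simp
  qed
qed

lemma part1_key:
  fixes mu lam :: "'a \<Rightarrow> real"
  assumes fin: "finite F" and pos: "\<forall>f\<in>F. lam f \<ge> 0 \<and> mu f > 0" and th: "0 < \<theta>"
    and cond: "\<forall>f\<in>F. lam f / mu f * (\<Sum>S\<in>Ind rel (nbr F rel f). \<Prod>g\<in>S. mu g) \<le> \<theta>"
    and R: "R \<in> Ind rel F"
  shows "(\<Prod>f\<in>R. lam f) * (\<Sum>S\<in>Ind rel (nbr_set F rel R). \<Prod>g\<in>S. mu g) \<le> \<theta> ^ card R * (\<Prod>g\<in>R. mu g)"
proof -
  have RF: "R \<subseteq> F" using R by (simp add: Ind_def)
  define s where "s f = (\<Sum>S\<in>Ind rel (nbr F rel f). \<Prod>g\<in>S. mu g)" for f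
  have s0: "s f \<ge> 0" if "f \<in> F" for f
    unfolding s_def using pos by (intro sum_nonneg prod_nonneg) (auto simp: Ind_def nbr_def intro: less_imp_le)
  have L0: "(\<Prod>f\<in>R. lam f) \<ge> 0" using pos RF by (intro prod_nonneg) auto
  have "(\<Prod>f\<in>R. lam f) * (\<Sum>S\<in>Ind rel (nbr_set F rel R). \<Prod>g\<in>S. mu g) \<le> (\<Prod>f\<in>R. lam f) * (\<Prod>f\<in>R. s f)"
    unfolding s_def using Ind_prod_bound[OF fin _ RF] pos L0 by (intro mult_left_mono) auto
  also have "\<dots> = (\<Prod>f\<in>R. lam f * s f)" by (simp add: prod.distrib)
  also have "\<dots> \<le> (\<Prod>f\<in>R. \<theta> * mu f)"
  proof (rule prod_mono)
    fix f assume f: "f \<in> R"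
    then have fF: "f \<in> F" using RF by auto
    have "lam f / mu f * s f \<le> \<theta>" using cond fF by (simp add: s_def)
    then have "lam f * s f \<le> \<theta> * mu f" using pos fF by (simp add: field_simps)
    then show "0 \<le> lam f * s f \<and> lam f * s f \<le> \<theta> * mu f" using pos fF s0 by auto
  qed
  also have "\<dots> = \<theta> ^ card R * (\<Prod>g\<in>R. mu g)" by (simp add: prod.distrib)
  finally show ?thesis .
qed


lemma part2_key:
  fixes p lam :: "'a \<Rightarrow> real"
  assumes fin: "finite F" and sym: "\<forall>f\<in>F. \<forall>g\<in>F. rel f g = rel g f"
    and qnn: "\<forall>S. S \<subseteq> F \<longrightarrow> q_poly F rel p S \<ge> 0" and q0: "q_poly F rel p {} > 0"
    and lam: "\<forall>f\<in>F. 0 \<le> lam f \<and> lam f \<le> \<theta> * p f" and th: "0 < \<theta>" and R: "R \<in> Ind rel F"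
  shows "(\<Prod>f\<in>R. lam f) * (\<Sum>S\<in>Ind rel (nbr_set F rel R). q_poly F rel p S / q_poly F rel p {})
     \<le> \<theta> ^ card R * (q_poly F rel p R / q_poly F rel p {})"
proof -
  have RF: "R \<subseteq> F" using R by (simp add: Ind_def)
  define \<Sigma> where "\<Sigma> = (\<Sum>S\<in>Ind rel (nbr_set F rel R). q_poly F rel p S)"
  define Q where "Q = (\<Sum>I\<in>{I\<in>Ind rel F. I \<inter> (R \<union> nbr_set F rel R) = {}}. (-1) ^ card I * (\<Prod>f\<in>I. p f))"
  have NF: "R \<union> nbr_set F rel R \<subseteq> F" using RF nbr_set_sub[of F rel R] by auto
  have \<Sigma>0: "\<Sigma> \<ge> 0" unfolding \<Sigma>_def using qnn nbr_set_sub[of F rel R] by (intro sum_nonneg) (auto simp: Ind_def)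
  have "\<Sigma> \<le> (\<Sum>S\<in>Ind rel (R \<union> nbr_set F rel R). q_poly F rel p S)"
    unfolding \<Sigma>_def
  proof (rule sum_mono2)
    show "finite (Ind rel (R \<union> nbr_set F rel R))" using NF fin by (intro finite_Ind) (auto intro: finite_subset)
    show "Ind rel (nbr_set F rel R) \<subseteq> Ind rel (R \<union> nbr_set F rel R)" by (rule Ind_mono) auto
    fix S assume "S \<in> Ind rel (R \<union> nbr_set F rel R) - Ind rel (nbr_set F rel R)"
    then have "S \<subseteq> F" using NF by (auto simp: Ind_def)
    then show "0 \<le> q_poly F rel p S" using qnn by auto
  qed
  also have "\<dots> = Q" unfolding Q_def by (rule q_sum_Ind[OF fin NF])
  finally have \<Sigma>le: "\<Sigma> \<le> Q" .
  have pR: "(\<Prod>f\<in>R. lam f) \<le> \<theta> ^ card R * (\<Prod>f\<in>R. p f)"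
  proof -
    have "(\<Prod>f\<in>R. lam f) \<le> (\<Prod>f\<in>R. \<theta> * p f)" using lam RF by (intro prod_mono) auto
    then show ?thesis by (simp add: prod.distrib)
  qed
  have p0: "(\<Prod>f\<in>R. p f) \<ge> 0"
  proof -
    have "0 \<le> \<theta> * p f" if "f \<in> R" for f using lam RF that by force
    then have "p f \<ge> 0" if "f \<in> R" for f using that th by (simp add: zero_le_mult_iff)
    then show ?thesis by (intro prod_nonneg) auto
  qed
  have "(\<Prod>f\<in>R. lam f) * \<Sigma> \<le> \<theta> ^ card R * (\<Prod>f\<in>R. p f) * \<Sigma>"
    using pR \<Sigma>0 by (rule mult_right_mono)
  also have "\<dots> \<le> \<theta> ^ card R * (\<Prod>f\<in>R. p f) * Q"
    using \<Sigma>le p0 th by (intro mult_left_mono) auto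
  also have "\<dots> = \<theta> ^ card R * q_poly F rel p R"
    using q_R_factor[OF fin sym R, of p] by (simp add: Q_def)
  finally have main: "(\<Prod>f\<in>R. lam f) * \<Sigma> \<le> \<theta> ^ card R * q_poly F rel p R" .
  have "(\<Prod>f\<in>R. lam f) * (\<Sum>S\<in>Ind rel (nbr_set F rel R). q_poly F rel p S / q_poly F rel p {})
      = ((\<Prod>f\<in>R. lam f) * \<Sigma>) / q_poly F rel p {}"
    by (simp add: \<Sigma>_def sum_divide_distrib[symmetric])
  also have "\<dots> \<le> (\<theta> ^ card R * q_poly F rel p R) / q_poly F rel p {}"
    using main q0 by (intro divide_right_mono) auto
  finally show ?thesis by simp
qed

theorem theorem7:
  shows
  "(\<forall>(F :: 'a set) rel (lam :: 'a \<Rightarrow> real) (mu :: 'a \<Rightarrow> real) (\<theta> :: real).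
      finite F \<and> (\<forall>f\<in>F. \<forall>g\<in>F. rel f g = rel g f) \<and>
      (\<forall>f\<in>F. lam f \<ge> 0 \<and> mu f > 0) \<and> 0 < \<theta> \<and> \<theta> < 1 \<and>
      (\<forall>f\<in>F. lam f / mu f * (\<Sum>S\<in>Ind rel (nbr F rel f). \<Prod>g\<in>S. mu g) \<le> \<theta>)
      \<longrightarrow> (\<forall>R\<in>Ind rel F. \<forall>t::nat.
             (seq_weight lam) summable_on (Stab F rel R t) \<and>
             (\<Sum>\<^sub>\<infinity>\<phi>\<in>Stab F rel R t. seq_weight lam \<phi>) \<le> (\<Prod>g\<in>R. mu g) * \<theta> ^ t))
   \<and>
   (\<forall>(\<Omega> :: 'w set) (F :: 'w set set) rel \<rho> \<omega> p lam (\<theta> :: real).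
      flaw_setting \<Omega> F \<rho> \<omega> \<and> (\<forall>f\<in>F. \<forall>g\<in>F. rel f g = rel g f) \<and>
      shearer_condition \<Omega> F rel \<rho> \<omega> p lam \<theta>
      \<longrightarrow> (\<forall>R\<in>Ind rel F. \<forall>t::nat.
             (seq_weight lam) summable_on (Stab F rel R t) \<and>
             (\<Sum>\<^sub>\<infinity>\<phi>\<in>Stab F rel R t. seq_weight lam \<phi>)
               \<le> q_poly F rel p R / q_poly F rel p {} * \<theta> ^ t))"
proof (intro conjI allI impI)
  fix F :: "'a set" and rel and lam mu :: "'a \<Rightarrow> real" and \<theta> :: real
  assume H: "finite F \<and> (\<forall>f\<in>F. \<forall>g\<in>F. rel f g = rel g f) \<and>
      (\<forall>f\<in>F. lam f \<ge> 0 \<and> mu f > 0) \<and> 0 < \<theta> \<and> \<theta> < 1 \<and>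
      (\<forall>f\<in>F. lam f / mu f * (\<Sum>S\<in>Ind rel (nbr F rel f). \<Prod>g\<in>S. mu g) \<le> \<theta>)"
  then have fin: "finite F" and pos: "\<forall>f\<in>F. lam f \<ge> 0 \<and> mu f > 0" and th: "0 < \<theta>" "\<theta> < 1"
    and cond: "\<forall>f\<in>F. lam f / mu f * (\<Sum>S\<in>Ind rel (nbr F rel f). \<Prod>g\<in>S. mu g) \<le> \<theta>" by auto
  show "\<forall>R\<in>Ind rel F. \<forall>t::nat.
             (seq_weight lam) summable_on (Stab F rel R t) \<and>
             (\<Sum>\<^sub>\<infinity>\<phi>\<in>Stab F rel R t. seq_weight lam \<phi>) \<le> (\<Prod>g\<in>R. mu g) * \<theta> ^ t"
  proof (rule Stab_bound[where M = "\<lambda>S. \<Prod>g\<in>S. mu g"])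
    show "finite F" by (rule fin)
    show "\<forall>f\<in>F. lam f \<ge> 0" using pos by auto
    show "0 \<le> \<theta>" "\<theta> \<le> 1" using th by auto
    show "(\<Prod>g\<in>{}. mu g) = 1" by simp
    show "\<forall>S\<in>Ind rel F. (\<Prod>g\<in>S. mu g) \<ge> 0"
      using pos by (auto simp: Ind_def intro!: prod_nonneg) (meson less_imp_le subsetD)
    show "\<forall>R\<in>Ind rel F. (\<Prod>f\<in>R. lam f) * (\<Sum>S\<in>Ind rel (nbr_set F rel R). \<Prod>g\<in>S. mu g) \<le> \<theta> ^ card R * (\<Prod>g\<in>R. mu g)"
      using part1_key[OF fin pos th(1) cond] by blast
  qed
next
  fix \<Omega> :: "'w set" and F :: "'w set set" and rel \<rho> \<omega> p lam and \<theta> :: real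
  assume H: "flaw_setting \<Omega> F \<rho> \<omega> \<and> (\<forall>f\<in>F. \<forall>g\<in>F. rel f g = rel g f) \<and>
      shearer_condition \<Omega> F rel \<rho> \<omega> p lam \<theta>"
  then have fs: "flaw_setting \<Omega> F \<rho> \<omega>" and sym: "\<forall>f\<in>F. \<forall>g\<in>F. rel f g = rel g f"
    and sc: "shearer_condition \<Omega> F rel \<rho> \<omega> p lam \<theta>" by auto
  have fO: "finite \<Omega>" and fsub: "\<forall>f\<in>F. f \<subseteq> \<Omega>"
    and rho: "\<forall>f\<in>F. \<forall>\<sigma>\<in>f. \<forall>\<sigma>'\<in>\<Omega>. \<rho> f \<sigma> \<sigma>' \<ge> 0"
    and om: "\<forall>\<sigma>\<in>\<Omega>. \<omega> \<sigma> > 0" and om1: "(\<Sum>\<sigma>\<in>\<Omega>. \<omega> \<sigma>) = 1"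
    using fs by (auto simp: flaw_setting_def)
  have fin: "finite F"
    using fO fsub by (intro finite_subset[of F "Pow \<Omega>"]) auto
  have qnn: "\<forall>S. S \<subseteq> F \<longrightarrow> q_poly F rel p S \<ge> 0" and q0: "q_poly F rel p {} > 0"
    and lamge: "\<forall>f\<in>F. \<forall>\<sigma>'\<in>\<Omega>.
        lam f \<ge> (\<Sum>\<sigma> \<in> {\<sigma> \<in> f. \<sigma>' \<in> supp_A \<Omega> \<rho> f \<sigma>}. \<rho> f \<sigma> \<sigma>' * \<omega> \<sigma> / \<omega> \<sigma>')"
    and th: "0 < \<theta>" "\<theta> < 1" and lamle: "\<forall>f\<in>F. lam f \<le> \<theta> * p f"
    using sc by (auto simp: shearer_condition_def)
  have "\<Omega> \<noteq> {}" using om1 by auto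
  then obtain \<sigma>' where s': "\<sigma>' \<in> \<Omega>" by auto
  have lam0: "\<forall>f\<in>F. lam f \<ge> 0"
  proof
    fix f assume f: "f \<in> F"
    have "0 \<le> (\<Sum>\<sigma> \<in> {\<sigma> \<in> f. \<sigma>' \<in> supp_A \<Omega> \<rho> f \<sigma>}. \<rho> f \<sigma> \<sigma>' * \<omega> \<sigma> / \<omega> \<sigma>')"
    proof (rule sum_nonneg)
      fix \<sigma> assume "\<sigma> \<in> {\<sigma> \<in> f. \<sigma>' \<in> supp_A \<Omega> \<rho> f \<sigma>}"
      then have "\<sigma> \<in> f" "\<sigma> \<in> \<Omega>" using fsub f by auto
      then show "0 \<le> \<rho> f \<sigma> \<sigma>' * \<omega> \<sigma> / \<omega> \<sigma>'"
        using rho f s' om by (intro divide_nonneg_nonneg mult_nonneg_nonneg) (auto intro: less_imp_le)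
    qed
    also have "\<dots> \<le> lam f" using lamge f s' by blast
    finally show "lam f \<ge> 0" .
  qed
  show "\<forall>R\<in>Ind rel F. \<forall>t::nat.
             (seq_weight lam) summable_on (Stab F rel R t) \<and>
             (\<Sum>\<^sub>\<infinity>\<phi>\<in>Stab F rel R t. seq_weight lam \<phi>)
               \<le> q_poly F rel p R / q_poly F rel p {} * \<theta> ^ t"
  proof (rule Stab_bound[where M = "\<lambda>S. q_poly F rel p S / q_poly F rel p {}"])
    show "finite F" by (rule fin)
    show "\<forall>f\<in>F. lam f \<ge> 0" by (rule lam0)
    show "0 \<le> \<theta>" "\<theta> \<le> 1" using th by auto
    show "q_poly F rel p {} / q_poly F rel p {} = 1" using q0 by simp
    show "\<forall>S\<in>Ind rel F. q_poly F rel p S / q_poly F rel p {} \<ge> 0"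
      using qnn q0 by (auto simp: Ind_def)
    show "\<forall>R\<in>Ind rel F. (\<Prod>f\<in>R. lam f) * (\<Sum>S\<in>Ind rel (nbr_set F rel R). q_poly F rel p S / q_poly F rel p {})
        \<le> \<theta> ^ card R * (q_poly F rel p R / q_poly F rel p {})"
      using part2_key[OF fin sym qnn q0 _ th(1)] lam0 lamle by blast
  qed
qed

end
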